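(* Let $1<r\le\infty$, let $A,B\in\mathrm{M}_2(\mathbb{C})$, and let $G:\{z\in\mathbb{C}:|z|<r\}\to\mathrm{M}_2(\mathbb{C})$ be holomorphic with $G(z)=\sum_{k=0}^\infty z^kG_k$ for $|z|<1$. Suppose $a_0\neq 0$ is an eigenvector of $A$ for the eigenvalue $\alpha_0$ and that $A-\alpha_0-k$ is invertible for every positive integer $k$, and let $\beta_1$ be an eigenvalue of $B$. Let $y_0(z)=z^{\alpha_0}h_0(z)$ be the Floquet solution of $$y'(z)=\Big(\tfrac{1}{z}A+\tfrac{1}{z-1}B+G(z)\Big)y(z)$$ with $h_0$ holomorphic on $\{|z|<r\}\setminus[1,r[$ and $h_0(0)=a_0$, and write $\eta_0(z):=(1-z)^{-\beta_1-1}h_0(z)=\sum_{k=0}^\infty z^kd_k$ for $|z|<1$ (so $d_0=a_0$). Put $A_0:=A-\alpha_0$ and $A_1:=B-\beta_1-1$. Then the coefficients $d_k$ can be computed by the two-step recurrence $$u_k:=(A_0-k)^{-1}\Big((A_1+1)d_{k-1}-\sum_{\ell=0}^{k-1}G_{k-1-\ell}u_\ell\Big),\qquad d_k:=d_{k-1}+u_k\qquad (k=1,2,3,\ldots),$$ starting with $u_0=d_0:=a_0$.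
   Context: Powers are principal branches: $z^{\alpha}$ with $-\pi<\arg z<\pi$ and $(1-z)^{\beta}$ with $-\pi<\arg(1-z)<\pi$. The function $\eta_0$ is the holomorphic solution on the unit disk of the transformed system $\eta'(z)=\big(\frac{1}{z}A_0+\frac{1}{z-1}A_1+G(z)\big)\eta(z)$ obtained via $y(z)=z^{\alpha_0}(1-z)^{\beta_1+1}\eta(z)$. *)

theory Defs
  imports "HOL-Analysis.Analysis"
begin

definition vec_holomorphic_on :: "(complex \<Rightarrow> complex^'n) \<Rightarrow> complex set \<Rightarrow> bool" where
  "vec_holomorphic_on f S \<longleftrightarrow> (\<forall>i. (\<lambda>z. f z $ i) holomorphic_on S)"

definition mat_holomorphic_on :: "(complex \<Rightarrow> complex^'n^'m) \<Rightarrow> complex set \<Rightarrow> bool" where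
  "mat_holomorphic_on f S \<longleftrightarrow> (\<forall>i j. (\<lambda>z. f z $ i $ j) holomorphic_on S)"

definition vec_has_cderiv :: "(complex \<Rightarrow> complex^'n) \<Rightarrow> complex^'n \<Rightarrow> complex \<Rightarrow> bool" where
  "vec_has_cderiv f f' z \<longleftrightarrow> (\<forall>i. ((\<lambda>w. f w $ i) has_field_derivative (f' $ i)) (at z))"

fun ud_rec :: "complex^2^2 \<Rightarrow> complex^2^2 \<Rightarrow> (nat \<Rightarrow> complex^2^2) \<Rightarrow> complex^2
                 \<Rightarrow> nat \<Rightarrow> (complex^2) list \<times> (complex^2)" where
  "ud_rec A0 A1 Gk a0 0 = ([a0], a0)"
| "ud_rec A0 A1 Gk a0 (Suc k) =
     (let (us, d) = ud_rec A0 A1 Gk a0 k;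
          u = matrix_inv (A0 - mat (of_nat (Suc k))) *v
                ((A1 + mat 1) *v d - (\<Sum>l\<le>k. Gk (k - l) *v (us ! l)))
      in (us @ [u], d + u))"

definition rec_d :: "complex^2^2 \<Rightarrow> complex^2^2 \<Rightarrow> (nat \<Rightarrow> complex^2^2) \<Rightarrow> complex^2 \<Rightarrow> nat \<Rightarrow> complex^2" where
  "rec_d A0 A1 Gk a0 k = snd (ud_rec A0 A1 Gk a0 k)"

end

theory Submission
  imports Defs "HOL-Complex_Analysis.Complex_Analysis"
begin

unbundle no Formal_Power_Series.fps_syntax


lemma matrix_inv_left':
  fixes M :: "'a::field^'n^'n"
  assumes "invertible M" shows "matrix_inv M ** M = mat 1"
  using assms unfolding invertible_def matrix_inv_def by (metis (mono_tags, lifting) someI_ex)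

lemma rec_from_identity:
  fixes A0 A1 :: "complex^2^2" and Gk :: "nat \<Rightarrow> complex^2^2" and d u :: "nat \<Rightarrow> complex^2"
  assumes inv: "\<And>k. invertible (A0 - mat (of_nat (Suc k)))"
    and key: "\<And>k. (A0 - mat (of_nat (Suc k))) *v (d (Suc k) - d k) = (A1 + mat 1) *v d k - (\<Sum>l\<le>k. Gk (k-l) *v u l)"
    and u: "u = (\<lambda>n. if n = 0 then d 0 else d n - d (n-1))"
    and d0: "d 0 = a0"
  shows "ud_rec A0 A1 Gk a0 k = (map u [0..<Suc k], d k)"
proof (induction k)
  case 0
  then show ?case using u d0 by simp
next
  case (Suc k)
  let ?M = "A0 - mat (of_nat (Suc k))"
  have us: "(\<Sum>l\<le>k. Gk (k - l) *v (map u [0..<Suc k] ! l)) = (\<Sum>l\<le>k. Gk (k-l) *v u l)"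
    by (intro sum.cong refl) (simp del: upt_Suc add: nth_map_upt)
  have "matrix_inv ?M *v ((A1 + mat 1) *v d k - (\<Sum>l\<le>k. Gk (k-l) *v u l))
        = matrix_inv ?M *v (?M *v (d (Suc k) - d k))" by (simp only: key)
  also have "\<dots> = d (Suc k) - d k"
    by (simp only: matrix_vector_mul_assoc matrix_inv_left'[OF inv] matrix_vector_mul_lid)
  finally have e: "matrix_inv ?M *v ((A1 + mat 1) *v d k - (\<Sum>l\<le>k. Gk (k-l) *v u l)) = d (Suc k) - d k" .
  have "ud_rec A0 A1 Gk a0 (Suc k) = (map u [0..<Suc k] @ [d (Suc k) - d k], d k + (d (Suc k) - d k))"
    using Suc.IH e us by (simp del: upt_Suc add: Let_def)
  moreover have "u (Suc k) = d (Suc k) - d k" using u by simp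
  ultimately show ?case by simp
qed


lemma mat_mult_vec: "mat c *v x = c *s (x::'a::comm_semiring_1^'n)"
  by (simp add: vec_eq_iff matrix_vector_mult_def mat_def if_distrib if_distribR sum.delta cong: if_cong)

lemma mv_scale: "(M::'a::comm_semiring_1^'n^'m) *v (c *s x) = c *s (M *v x)"
  by (simp add: vec_eq_iff matrix_vector_mult_def sum_distrib_left algebra_simps)

lemma cpowr_minus1: "(w::complex) \<noteq> 0 \<Longrightarrow> w powr (a - 1) = w powr a / w"
  by (simp add: powr_def exp_diff left_diff_distrib)

lemma cpowr_nz: "(w::complex) \<noteq> 0 \<Longrightarrow> w powr a \<noteq> 0"
  by (simp add: powr_def)

lemma sum_mat_minus:
  fixes M :: "'a::comm_ring_1^'n^'n"
  shows "(\<Sum>j\<in>UNIV. (M - mat c)$i$j * x j) = (\<Sum>j\<in>UNIV. M$i$j * x j) - c * x i"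
proof -
  have "(M - mat c)$i$j * x j = M$i$j * x j - (if j = i then c * x j else 0)" for j
    by (auto simp: mat_def left_diff_distrib)
  then show ?thesis by (simp add: sum_subtractf)
qed

lemma ode_pointwise:
  fixes z \<alpha>0 \<beta>1 e' :: complex and A B Gz :: "complex^'n^'n" and h0 :: "complex \<Rightarrow> complex^'n"
    and e :: "'n \<Rightarrow> complex \<Rightarrow> complex" and S :: "complex set"
  assumes z: "0 < Re z" "Re z < 1" and S: "open S" "z \<in> S"
    and h0e: "\<And>w j. w \<in> S \<Longrightarrow> h0 w $ j = (1 - w) powr (\<beta>1 + 1) * e j w"
    and de: "(e i has_field_derivative e') (at z)"
    and ode: "((\<lambda>w. w powr \<alpha>0 * h0 w $ i) has_field_derivative
                (((mat (1/z) ** A + mat (1/(z-1)) ** B + Gz) *v (z powr \<alpha>0 *s h0 z)) $ i)) (at z)"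
  shows "z*(1-z)*e' = (1-z)*(\<Sum>j\<in>UNIV. (A - mat \<alpha>0)$i$j * e j z) - z*(\<Sum>j\<in>UNIV. (B - mat (\<beta>1+1))$i$j * e j z)
          + z*(1-z)*(\<Sum>j\<in>UNIV. Gz$i$j * e j z)"
proof -
  define p where "p w = (1 - w) powr (\<beta>1 + 1)" for w
  have z0: "z \<noteq> 0" and z1: "1 - z \<noteq> 0" using z by auto
  have z1': "z - 1 \<noteq> 0" using z1 by simp
  have znp: "z \<notin> \<real>\<^sub>\<le>\<^sub>0" and z1np: "1 - z \<notin> \<real>\<^sub>\<le>\<^sub>0" using z by (auto simp: complex_nonpos_Reals_iff)
  have P1: "((\<lambda>w. w powr \<alpha>0) has_field_derivative \<alpha>0 * z powr (\<alpha>0 - 1)) (at z)"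
    by (rule has_field_derivative_powr[OF znp])
  have P2: "(p has_field_derivative ((\<beta>1 + 1) * (1 - z) powr (\<beta>1 + 1 - 1)) * (-1)) (at z)"
  proof -
    have g: "((\<lambda>w. 1 - w) has_field_derivative -1) (at z)" by (auto intro!: derivative_eq_intros)
    show ?thesis unfolding p_def using DERIV_chain2[where f="\<lambda>w. w powr (\<beta>1 + 1)" and g="\<lambda>w. 1 - w", OF has_field_derivative_powr[OF z1np, of "\<beta>1 + 1"] g]
      by simp
  qed
  note F = DERIV_mult[OF P1 DERIV_mult[OF P2 de]]
  have F': "((\<lambda>w. w powr \<alpha>0 * h0 w $ i) has_field_derivative
      \<alpha>0 * z powr (\<alpha>0 - 1) * (p z * e i z) + ((\<beta>1 + 1) * (1 - z) powr (\<beta>1 + 1 - 1) * - 1 * e i z + e' * p z) * z powr \<alpha>0) (at z)"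
    by (rule has_field_derivative_transform_within_open[OF F S]) (simp add: h0e p_def)
  have eq: "\<alpha>0 * z powr (\<alpha>0 - 1) * (p z * e i z) + ((\<beta>1 + 1) * (1 - z) powr (\<beta>1 + 1 - 1) * - 1 * e i z + e' * p z) * z powr \<alpha>0
     = (((mat (1/z) ** A + mat (1/(z-1)) ** B + Gz) *v (z powr \<alpha>0 *s h0 z)) $ i)"
    using DERIV_unique[OF F' ode] .
  define ev where "ev = (\<chi> j. e j z)"
  have h0z: "h0 z = p z *s ev" using h0e[OF S(2)] by (simp add: vec_eq_iff ev_def p_def)
  define SA where "SA = (\<Sum>j\<in>UNIV. A$i$j * e j z)"
  define SB where "SB = (\<Sum>j\<in>UNIV. B$i$j * e j z)"
  define SG where "SG = (\<Sum>j\<in>UNIV. Gz$i$j * e j z)"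
  have V: "(((mat (1/z) ** A + mat (1/(z-1)) ** B + Gz) *v (z powr \<alpha>0 *s h0 z)) $ i)
     = z powr \<alpha>0 * p z * (SA / z + SB / (z - 1) + SG)"
    by (simp add: h0z mv_scale matrix_vector_mult_add_rdistrib matrix_vector_mul_assoc[symmetric] mat_mult_vec)
       (simp add: SA_def SB_def SG_def ev_def matrix_vector_mult_def algebra_simps)
  have pz1: "z powr (\<alpha>0 - 1) = z powr \<alpha>0 / z" by (rule cpowr_minus1[OF z0])
  have pz2: "(1 - z) powr (\<beta>1 + 1 - 1) = p z / (1 - z)"
    unfolding p_def by (subst cpowr_minus1[OF z1, symmetric]) simp
  have eqA: "\<alpha>0 * (z powr \<alpha>0 / z) * (p z * e i z) + ((\<beta>1 + 1) * (p z / (1 - z)) * - 1 * e i z + e' * p z) * z powr \<alpha>0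
     = z powr \<alpha>0 * p z * (SA / z + SB / (z - 1) + SG)"
    using eq unfolding pz1 pz2 V .
  have "\<alpha>0 * (z powr \<alpha>0 / z) * (p z * e i z) + ((\<beta>1 + 1) * (p z / (1 - z)) * - 1 * e i z + e' * p z) * z powr \<alpha>0
     = z powr \<alpha>0 * p z * (\<alpha>0 / z * e i z - (\<beta>1 + 1) / (1 - z) * e i z + e')"
    by (simp add: divide_inverse algebra_simps)
  note hh = this
  have eq2: "z powr \<alpha>0 * p z * (\<alpha>0 / z * e i z - (\<beta>1 + 1) / (1 - z) * e i z + e')
      = z powr \<alpha>0 * p z * (SA / z + SB / (z - 1) + SG)" using hh eqA by metis
  have c0: "z powr \<alpha>0 * p z \<noteq> 0" using cpowr_nz z0 z1 by (simp add: p_def)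
  have eq3: "\<alpha>0 / z * e i z - (\<beta>1 + 1) / (1 - z) * e i z + e' = SA / z + SB / (z - 1) + SG"
    using eq2 c0 by simp
  have sA: "(\<Sum>j\<in>UNIV. (A - mat \<alpha>0)$i$j * e j z) = SA - \<alpha>0 * e i z"
    unfolding SA_def by (rule sum_mat_minus)
  have sB: "(\<Sum>j\<in>UNIV. (B - mat (\<beta>1+1))$i$j * e j z) = SB - (\<beta>1+1) * e i z"
    unfolding SB_def by (rule sum_mat_minus)
  have l1: "z*(1-z)*(\<alpha>0 / z * e i z - (\<beta>1 + 1) / (1 - z) * e i z + e') = (1-z)*\<alpha>0*e i z - z*(\<beta>1+1)*e i z + z*(1-z)*e'"
  proof -
    have a: "z*(1-z)*(\<alpha>0 / z * e i z) = (1-z)*\<alpha>0*e i z" using z0 by (simp add: field_simps)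
    have b: "z*(1-z)*((\<beta>1 + 1) / (1 - z) * e i z) = z*(\<beta>1+1)*e i z" using z1 by (simp add: field_simps)
    have "z*(1-z)*(\<alpha>0 / z * e i z - (\<beta>1 + 1) / (1 - z) * e i z + e') =
       z*(1-z)*(\<alpha>0 / z * e i z) - z*(1-z)*((\<beta>1 + 1) / (1 - z) * e i z) + z*(1-z)*e'"
      by (simp only: distrib_left right_diff_distrib)
    then show ?thesis unfolding a b .
  qed
  have l2: "z*(1-z)*(SA / z + SB / (z - 1) + SG) = (1-z)*SA - z*SB + z*(1-z)*SG"
  proof -
    have "z*(1-z)*(SB / (z - 1)) = - z * SB" using z1' by (simp add: field_simps)
    moreover have "z*(1-z)*(SA / z) = (1-z)*SA" using z0 by (simp add: field_simps)
    moreover have "z*(1-z)*(SA / z + SB / (z - 1) + SG) = z*(1-z)*(SA / z) + z*(1-z)*(SB / (z - 1)) + z*(1-z)*SG"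
      by (simp only: distrib_left)
    ultimately show ?thesis by simp
  qed
  from eq3 l1 l2 have "(1-z)*\<alpha>0*e i z - z*(\<beta>1+1)*e i z + z*(1-z)*e' = (1-z)*SA - z*SB + z*(1-z)*SG"
    by metis
  then show ?thesis
    unfolding sA sB SG_def[symmetric] by (simp add: algebra_simps)
qed


lemma sum_atMost_flip: "(\<Sum>l\<le>(k::nat). f (k - l)) = (\<Sum>l\<le>k. f l)"
  by (rule sum.reindex_bij_witness[of _ "\<lambda>l. k-l" "\<lambda>l. k-l"]) auto

lemma mat_nth: "mat c $ i $ j = (if i = j then c else 0)"
  by (simp add: mat_def)


lemma coeff_identity:
  fixes A0 A1 :: "complex^'n^'n" and Gk :: "nat \<Rightarrow> complex^'n^'n" and d u :: "nat \<Rightarrow> complex^'n"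
  assumes fpsid: "\<And>i. fps_X * (1 - fps_X) * fps_deriv (Abs_fps (\<lambda>k. d k $ i)) =
      (1 - fps_X) * (\<Sum>j\<in>UNIV. fps_const (A0$i$j) * Abs_fps (\<lambda>k. d k $ j))
      - fps_X * (\<Sum>j\<in>UNIV. fps_const (A1$i$j) * Abs_fps (\<lambda>k. d k $ j))
      + fps_X * (\<Sum>j\<in>UNIV. Abs_fps (\<lambda>k. Gk k $ i $ j) * Abs_fps (\<lambda>k. u k $ j))"
  shows "(A0 - mat (of_nat (Suc k))) *v (d (Suc k) - d k) = (A1 + mat 1) *v d k - (\<Sum>l\<le>k. Gk (k-l) *v u l)"
proof (subst vec_eq_iff, intro allI)
  fix i
  let ?E = "\<lambda>j. Abs_fps (\<lambda>k. d k $ j)"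
  have "fps_nth (fps_X * (1 - fps_X) * fps_deriv (?E i)) (Suc k) = fps_nth (fps_X * fps_deriv (?E i) - fps_X * (fps_X * fps_deriv (?E i))) (Suc k)"
    by (simp add: algebra_simps)
  also have "\<dots> = of_nat (Suc k) * d (Suc k) $ i - of_nat k * d k $ i"
    by (cases k) (simp_all add: algebra_simps)
  finally have L: "fps_nth (fps_X * (1 - fps_X) * fps_deriv (?E i)) (Suc k) = of_nat (Suc k) * d (Suc k) $ i - of_nat k * d k $ i" .
  let ?S = "(\<Sum>j\<in>UNIV. fps_const (A0$i$j) * ?E j)"
  have R1: "fps_nth ((1 - fps_X) * ?S) (Suc k) = (\<Sum>j\<in>UNIV. A0$i$j * (d (Suc k) $ j - d k $ j))"
  proof -
    have "fps_nth ((1 - fps_X) * ?S) (Suc k) = fps_nth (?S - fps_X * ?S) (Suc k)" by (simp add: algebra_simps)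
    also have "\<dots> = (\<Sum>j\<in>UNIV. A0$i$j * (d (Suc k) $ j - d k $ j))"
      by (simp add: fps_sum_nth algebra_simps sum_subtractf)
    finally show ?thesis .
  qed
  have R2: "fps_nth (fps_X * (\<Sum>j\<in>UNIV. fps_const (A1$i$j) * ?E j)) (Suc k) = (\<Sum>j\<in>UNIV. A1$i$j * d k $ j)"
    by (simp add: fps_sum_nth)
  have R3: "fps_nth (fps_X * (\<Sum>j\<in>UNIV. Abs_fps (\<lambda>k. Gk k $ i $ j) * Abs_fps (\<lambda>k. u k $ j))) (Suc k)
      = (\<Sum>l\<le>k. Gk (k-l) *v u l) $ i"
  proof -
    have "fps_nth (fps_X * (\<Sum>j\<in>UNIV. Abs_fps (\<lambda>k. Gk k $ i $ j) * Abs_fps (\<lambda>k. u k $ j))) (Suc k)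
       = (\<Sum>j\<in>UNIV. \<Sum>m\<le>k. Gk m $ i $ j * u (k - m) $ j)"
      by (simp only: fps_X_mult_nth) (simp add: fps_sum_nth fps_mult_nth atLeast0AtMost)
    also have "\<dots> = (\<Sum>m\<le>k. (Gk m *v u (k - m)) $ i)"
      by (subst sum.swap) (simp add: matrix_vector_mult_def)
    also have "\<dots> = (\<Sum>l\<le>k. (Gk (k - l) *v u l) $ i)"
      by (subst sum_atMost_flip[symmetric, where f = "\<lambda>l. (Gk (k - l) *v u l) $ i"]) (intro sum.cong; simp)
    finally show ?thesis by simp
  qed
  have "of_nat (Suc k) * d (Suc k) $ i - of_nat k * d k $ i =
        (\<Sum>j\<in>UNIV. A0$i$j * (d (Suc k) $ j - d k $ j)) - (\<Sum>j\<in>UNIV. A1$i$j * d k $ j) + (\<Sum>l\<le>k. Gk (k-l) *v u l) $ i"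
    using arg_cong[OF fpsid[of i], of "\<lambda>f. fps_nth f (Suc k)"] L R1 R2 R3 by simp
  then show "((A0 - mat (of_nat (Suc k))) *v (d (Suc k) - d k)) $ i = ((A1 + mat 1) *v d k - (\<Sum>l\<le>k. Gk (k-l) *v u l)) $ i"
    by (simp add: matrix_vector_mult_diff_rdistrib matrix_vector_mult_add_rdistrib mat_mult_vec)
       (simp add: matrix_vector_mult_def algebra_simps sum_subtractf)
qed

lemma mat_mult_mat_nth: "(mat c ** M) $ i $ j = c * (M::'a::comm_semiring_1^'n^'m) $ i $ j"
  by (simp add: matrix_matrix_mult_def mat_def if_distrib if_distribR sum.delta cong: if_cong)

lemma mat_add_eq: "mat (a + b) = mat a + (mat b :: 'a::semiring_1^'n^'n)"
  by (simp add: vec_eq_iff mat_def)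

lemma radius_ge1:
  fixes c :: "nat \<Rightarrow> complex"
  assumes "\<And>z. cmod z < 1 \<Longrightarrow> summable (\<lambda>k. c k * z ^ k)"
  shows "fps_conv_radius (Abs_fps c) \<ge> 1"
  unfolding fps_conv_radius_def fps_nth_Abs_fps
proof (rule conv_radius_geI_ex)
  fix r :: real assume "0 < r" "ereal r < 1"
  then show "\<exists>z. norm z = r \<and> summable (\<lambda>n. c n * z ^ n)"
    by (intro exI[of _ "complex_of_real r"]) (auto intro!: assms)
qed

lemma pos_of_ge1: "(R::ereal) \<ge> 1 \<Longrightarrow> 0 < R"
proof -
  assume "(R::ereal) \<ge> 1"
  moreover have "(0::ereal) < 1" by simp
  ultimately show ?thesis by (meson less_le_trans)
qed

lemma ball_sub_eball: "R \<ge> 1 \<Longrightarrow> ball (0::complex) 1 \<subseteq> eball 0 R"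
  using ball_eball_mono[of 1 R 0] by (simp add: one_ereal_def)

lemma lt_radius: "R \<ge> 1 \<Longrightarrow> cmod z < 1 \<Longrightarrow> ereal (norm z) < R"
proof -
  assume R: "R \<ge> 1" and z: "cmod z < 1"
  have "ereal (norm z) < ereal 1" using z by simp
  also have "ereal 1 \<le> R" using R by (simp add: one_ereal_def)
  finally show ?thesis .
qed

theorem lemma2:
  fixes r :: ereal
    and A B :: "complex^2^2"
    and G :: "complex \<Rightarrow> complex^2^2"
    and Gk :: "nat \<Rightarrow> complex^2^2"
    and a0 :: "complex^2"
    and \<alpha>0 \<beta>1 :: complex
    and h0 :: "complex \<Rightarrow> complex^2"
    and d :: "nat \<Rightarrow> complex^2"
  assumes r: "1 < r"
    and G_hol: "mat_holomorphic_on G {z. ereal (cmod z) < r}"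
    and G_ser: "\<And>z. cmod z < 1 \<Longrightarrow> (\<lambda>k. mat (z ^ k) ** Gk k) sums G z"
    and a0_ne: "a0 \<noteq> 0"
    and a0_eig: "A *v a0 = \<alpha>0 *s a0"
    and inv: "\<And>k::nat. k \<ge> 1 \<Longrightarrow> invertible (A - mat (\<alpha>0 + of_nat k))"
    and \<beta>1_eig: "\<exists>v. v \<noteq> 0 \<and> B *v v = \<beta>1 *s v"
    and h0_hol: "vec_holomorphic_on h0 ({z. ereal (cmod z) < r} - {z. z \<in> \<real> \<and> 1 \<le> Re z})"
    and h0_0: "h0 0 = a0"
    and y0_ode: "\<And>z. z \<in> {z. ereal (cmod z) < r} - {z. z \<in> \<real> \<and> (Re z \<le> 0 \<or> 1 \<le> Re z)} \<Longrightarrow>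
        vec_has_cderiv (\<lambda>w. (w powr \<alpha>0) *s h0 w)
          ((mat (1 / z) ** A + mat (1 / (z - 1)) ** B + G z) *v ((z powr \<alpha>0) *s h0 z)) z"
    and d_ser: "\<And>z. cmod z < 1 \<Longrightarrow>
        (\<lambda>k. (z ^ k) *s d k) sums (((1 - z) powr (- \<beta>1 - 1)) *s h0 z)"
  shows "\<forall>k. d k = rec_d (A - mat \<alpha>0) (B - mat (\<beta>1 + 1)) Gk a0 k"
proof -
  define A0 where "A0 = A - mat \<alpha>0"
  define A1 where "A1 = B - mat (\<beta>1 + 1)"
  define E where "E j = Abs_fps (\<lambda>k. d k $ j)" for j :: 2
  define \<Gamma> where "\<Gamma> i j = Abs_fps (\<lambda>k. Gk k $ i $ j)" for i j :: 2
  define e where "e j = eval_fps (E j)" for j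
  define u where "u = (\<lambda>n. if n = 0 then d 0 else d n - d (n-1))"
  define q where "q w = (1 - w) powr (-\<beta>1-1)" for w :: complex
  have dsum: "(\<lambda>k. d k $ j * z^k) sums (q z * h0 z $ j)" if "cmod z < 1" for z j
    using bounded_linear.sums[OF bounded_linear_vec_nth[of j] d_ser[OF that]] by (simp add: q_def mult.commute)
  have gsum: "(\<lambda>k. Gk k $ i $ j * z^k) sums (G z $ i $ j)" if "cmod z < 1" for z i j
    using bounded_linear.sums[OF bounded_linear_vec_nth[of j] bounded_linear.sums[OF bounded_linear_vec_nth[of i] G_ser[OF that]]]
    by (simp add: mat_mult_mat_nth mult.commute)
  have radE: "fps_conv_radius (E j) \<ge> 1" for j
    unfolding E_def by (rule radius_ge1) (use dsum in \<open>auto simp: sums_iff\<close>)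
  have radG: "fps_conv_radius (\<Gamma> i j) \<ge> 1" for i j
    unfolding \<Gamma>_def by (rule radius_ge1) (use gsum in \<open>auto simp: sums_iff\<close>)
  have radE': "fps_conv_radius (fps_deriv (E j)) \<ge> 1" for j
    using radE[of j] fps_conv_radius_deriv[of "E j"] by (meson order_trans)
  have evalE: "e j z = q z * h0 z $ j" if "cmod z < 1" for z j
  proof -
    have "(\<lambda>n. fps_nth (E j) n * z ^ n) sums e j z"
      unfolding e_def by (rule sums_eval_fps) (rule lt_radius[OF radE that])
    then show ?thesis using dsum[OF that, of j] by (simp add: E_def sums_unique2)
  qed
  have evalG: "eval_fps (\<Gamma> i j) z = G z $ i $ j" if "cmod z < 1" for z i j
  proof -
    have "(\<lambda>n. fps_nth (\<Gamma> i j) n * z ^ n) sums eval_fps (\<Gamma> i j) z"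
      by (rule sums_eval_fps) (rule lt_radius[OF radG that])
    then show ?thesis using gsum[OF that, of i j] by (simp add: \<Gamma>_def sums_unique2)
  qed
  have h0e: "h0 w $ j = (1 - w) powr (\<beta>1 + 1) * e j w" if "w \<in> ball 0 1" for w j
  proof -
    from that have w: "cmod w < 1" by simp
    then have w1: "1 - w \<noteq> 0" by auto
    have "(1 - w) powr (\<beta>1 + 1) * q w = 1"
      unfolding q_def using w1 by (simp add: powr_def exp_add[symmetric] algebra_simps)
    then show ?thesis using evalE[OF w, of j] by (metis mult.assoc mult_1)
  qed
  define S0 where "S0 = ball (1/2::complex) (1/2)"
  have S0_prop: "0 < Re z \<and> Re z < 1 \<and> cmod z < 1" if "z \<in> S0" for z
  proof -
    have n: "cmod (z - 1/2) < 1/2" using that by (simp add: S0_def dist_norm norm_minus_commute)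
    have "\<bar>Re (z - 1/2)\<bar> \<le> cmod (z - 1/2)" by (rule abs_Re_le_cmod)
    moreover have "cmod z \<le> cmod (z - 1/2) + cmod (1/2 :: complex)"
      using norm_triangle_ineq[of "z - 1/2" "1/2"] by simp
    ultimately show ?thesis using n by auto
  qed
  have onS0: "z*(1-z)*eval_fps (fps_deriv (E i)) z = (1-z)*(\<Sum>j\<in>UNIV. A0$i$j * e j z) - z*(\<Sum>j\<in>UNIV. A1$i$j * e j z)
      + z*(1-z)*(\<Sum>j\<in>UNIV. eval_fps (\<Gamma> i j) z * e j z)" if "z \<in> S0" for z i
  proof -
    from S0_prop[OF that] have z: "0 < Re z" "Re z < 1" "cmod z < 1" by auto
    have de: "(e i has_field_derivative eval_fps (fps_deriv (E i)) z) (at z)"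
      unfolding e_def by (rule has_field_derivative_eval_fps) (rule lt_radius[OF radE z(3)])
    have zr: "ereal (cmod z) < r"
      using z(3) r by (metis ereal_less(3) less_trans one_ereal_def)
    have zin: "z \<in> {z. ereal (cmod z) < r} - {z. z \<in> \<real> \<and> (Re z \<le> 0 \<or> 1 \<le> Re z)}"
      using zr z by auto
    have ode: "((\<lambda>w. w powr \<alpha>0 * h0 w $ i) has_field_derivative
                (((mat (1/z) ** A + mat (1/(z-1)) ** B + G z) *v (z powr \<alpha>0 *s h0 z)) $ i)) (at z)"
      using y0_ode[OF zin] unfolding vec_has_cderiv_def by simp
    have zb: "z \<in> ball (0::complex) 1" using z(3) by simp
    have "z*(1-z)*eval_fps (fps_deriv (E i)) z = (1-z)*(\<Sum>j\<in>UNIV. (A - mat \<alpha>0)$i$j * e j z) - z*(\<Sum>j\<in>UNIV. (B - mat (\<beta>1+1))$i$j * e j z)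
          + z*(1-z)*(\<Sum>j\<in>UNIV. G z$i$j * e j z)"
      using ode_pointwise[OF z(1,2) open_ball zb h0e de ode] .
    then show ?thesis using evalG[OF z(3)] by (simp add: A0_def A1_def)
  qed
  define fL where "fL i z = z*(1-z)*eval_fps (fps_deriv (E i)) z" for i z
  define fR where "fR i z = (1-z)*(\<Sum>j\<in>UNIV. A0$i$j * e j z) - z*(\<Sum>j\<in>UNIV. A1$i$j * e j z)
      + z*((\<Sum>j\<in>UNIV. eval_fps (\<Gamma> i j) z * ((1-z) * e j z)))" for i z
  have onBall: "fL i z = fR i z" if "z \<in> ball 0 1" for i z
  proof (rule analytic_continuation_open[of S0 "ball 0 1" "fL i" "fR i"])
    show "open S0" "open (ball (0::complex) 1)" "S0 \<noteq> {}" "connected (ball (0::complex) 1)"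
      by (auto simp: S0_def)
    show "S0 \<subseteq> ball 0 1" using S0_prop by auto
    show "fL i holomorphic_on ball 0 1" unfolding fL_def
      by (intro holomorphic_intros ball_sub_eball radE')
    show "fR i holomorphic_on ball 0 1" unfolding fR_def e_def
      by (intro holomorphic_intros ball_sub_eball radE radG)
    show "fL i z = fR i z" if "z \<in> S0" for z
      using onS0[OF that, of i] unfolding fL_def fR_def
      by (simp add: sum_distrib_left algebra_simps)
  qed (use that in auto)
  have fpsid: "fps_X * (1 - fps_X) * fps_deriv (E i) =
      (1 - fps_X) * (\<Sum>j\<in>UNIV. fps_const (A0$i$j) * E j)
      - fps_X * (\<Sum>j\<in>UNIV. fps_const (A1$i$j) * E j)
      + fps_X * (\<Sum>j\<in>UNIV. \<Gamma> i j * ((1 - fps_X) * E j))" for i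
  proof -
    have eE: "e j has_fps_expansion E j" for j
      unfolding e_def by (rule eval_fps_has_fps_expansion) (rule pos_of_ge1[OF radE])
    have eG: "eval_fps (\<Gamma> i j) has_fps_expansion \<Gamma> i j" for j
      by (rule eval_fps_has_fps_expansion) (rule pos_of_ge1[OF radG])
    have eD: "eval_fps (fps_deriv (E i)) has_fps_expansion fps_deriv (E i)"
      by (rule eval_fps_has_fps_expansion) (rule pos_of_ge1[OF radE'])
    have one_minus: "(\<lambda>z::complex. 1 - z) has_fps_expansion 1 - fps_X"
      by (intro fps_expansion_intros)
    have xL: "fL i has_fps_expansion fps_X * (1 - fps_X) * fps_deriv (E i)"
      unfolding fL_def by (intro has_fps_expansion_mult has_fps_expansion_fps_X one_minus eD)
    have xR: "fR i has_fps_expansion (1 - fps_X) * (\<Sum>j\<in>UNIV. fps_const (A0$i$j) * E j)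
      - fps_X * (\<Sum>j\<in>UNIV. fps_const (A1$i$j) * E j)
      + fps_X * (\<Sum>j\<in>UNIV. \<Gamma> i j * ((1 - fps_X) * E j))"
      unfolding fR_def
      by (intro has_fps_expansion_add has_fps_expansion_diff has_fps_expansion_mult has_fps_expansion_fps_X
            one_minus has_fps_expansion_sum has_fps_expansion_cmult_left eE eG)
    have xD: "(\<lambda>z. fL i z - fR i z) has_fps_expansion (fps_X * (1 - fps_X) * fps_deriv (E i) - ((1 - fps_X) * (\<Sum>j\<in>UNIV. fps_const (A0$i$j) * E j)
      - fps_X * (\<Sum>j\<in>UNIV. fps_const (A1$i$j) * E j)
      + fps_X * (\<Sum>j\<in>UNIV. \<Gamma> i j * ((1 - fps_X) * E j))))" (is "_ has_fps_expansion ?D")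
      by (rule has_fps_expansion_diff[OF xL xR])
    have "?D = 0"
    proof (rule eval_fps_eqD)
      show "0 < fps_conv_radius ?D" using xD by (simp add: has_fps_expansion_def)
      show "0 < fps_conv_radius (0 :: complex fps)" by simp
      have ev1: "eventually (\<lambda>z. eval_fps ?D z = fL i z - fR i z) (nhds 0)"
        using xD by (simp add: has_fps_expansion_def)
      have ev2: "eventually (\<lambda>z::complex. z \<in> ball 0 1) (nhds 0)"
        by (rule eventually_nhds_in_open) auto
      show "eventually (\<lambda>z. eval_fps ?D z = eval_fps 0 z) (nhds 0)"
        using ev1 ev2 by eventually_elim (simp add: onBall)
    qed
    then show ?thesis by simp
  qed
  have U: "(1 - fps_X) * E j = Abs_fps (\<lambda>k. u k $ j)" for j
    by (rule fps_ext) (simp add: E_def u_def algebra_simps)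
  have key: "(A0 - mat (of_nat (Suc k))) *v (d (Suc k) - d k) = (A1 + mat 1) *v d k - (\<Sum>l\<le>k. Gk (k-l) *v u l)" for k
    using coeff_identity[OF fpsid[unfolded U, unfolded E_def \<Gamma>_def]] .
  have invk: "invertible (A0 - mat (of_nat (Suc k)))" for k
    using inv[of "Suc k"] by (simp add: A0_def mat_add_eq diff_diff_eq)
  have d0: "d 0 = a0"
  proof -
    have "e j 0 = d 0 $ j" for j by (simp add: e_def eval_fps_at_0 E_def)
    moreover have "e j 0 = a0 $ j" for j using evalE[of 0 j] by (simp add: q_def h0_0)
    ultimately show ?thesis by (simp add: vec_eq_iff)
  qed
  show ?thesis
    using rec_from_identity[OF invk key u_def d0] unfolding rec_d_def A0_def A1_def by simp
qed

end
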